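(* Let $F\subseteq\mathbb{R}^2$ be a self-similar set generated by an IFS $\Phi$ of contracting similarities satisfying the strong separation condition. Then $\dim_H(F\cap L)<1$ for every affine line $L\subseteq\mathbb{R}^2$.
   Context: SSC: the first-level cylinders $\phi_i(F)$ are pairwise disjoint. *)

theory Defs
  imports "HOL-Analysis.Analysis"
begin

text \<open>Contribution of a covering set to the s-dimensional Hausdorff sum,
  with the usual conventions: the empty set contributes 0, and for s = 0 every
  nonempty set contributes 1 (i.e. 0^0 = 1).\<close>
definition diam_pow :: "real \<Rightarrow> ('a::metric_space) set \<Rightarrow> ennreal" where
  "diam_pow s U = (if U = {} then 0 else if s = 0 then 1 else ennreal (diameter U powr s))"

definition hausdorff_pre :: "real \<Rightarrow> real \<Rightarrow> ('a::metric_space) set \<Rightarrow> ennreal" where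
  "hausdorff_pre s \<delta> A =
     (INF U \<in> {U :: nat \<Rightarrow> 'a set. A \<subseteq> (\<Union>i. U i) \<and> (\<forall>i. bounded (U i) \<and> diameter (U i) \<le> \<delta>)}.
        (\<Sum>i. diam_pow s (U i)))"

definition hausdorff_measure :: "real \<Rightarrow> ('a::metric_space) set \<Rightarrow> ennreal" where
  "hausdorff_measure s A = (SUP \<delta> \<in> {0<..}. hausdorff_pre s \<delta> A)"

definition hausdorff_dim :: "('a::metric_space) set \<Rightarrow> real" where
  "hausdorff_dim A = Inf {s. 0 \<le> s \<and> hausdorff_measure s A = 0}"

definition contracting_similarity :: "('a::metric_space \<Rightarrow> 'a) \<Rightarrow> bool" where
  "contracting_similarity f \<longleftrightarrow>
     (\<exists>r. 0 < r \<and> r < 1 \<and> (\<forall>x y. dist (f x) (f y) = r * dist x y))"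

definition self_similar_set :: "nat \<Rightarrow> (nat \<Rightarrow> 'a::metric_space \<Rightarrow> 'a) \<Rightarrow> 'a set \<Rightarrow> bool" where
  "self_similar_set m \<phi> F \<longleftrightarrow>
     F \<noteq> {} \<and> compact F \<and> F = (\<Union>i<m. \<phi> i ` F)"

definition SSC :: "nat \<Rightarrow> (nat \<Rightarrow> 'a \<Rightarrow> 'a) \<Rightarrow> 'a set \<Rightarrow> bool" where
  "SSC m \<phi> F \<longleftrightarrow> (\<forall>i<m. \<forall>j<m. i \<noteq> j \<longrightarrow> \<phi> i ` F \<inter> \<phi> j ` F = {})"

definition affine_line :: "('a::real_vector) set \<Rightarrow> bool" where
  "affine_line L \<longleftrightarrow> (\<exists>a v. v \<noteq> 0 \<and> L = {a + t *\<^sub>R v | t. True})"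

end

theory Submission
  imports Defs
begin


lemma sim_linear_part:
  fixes f :: "'a::euclidean_space \<Rightarrow> 'a"
  assumes r: "r > 0" and d: "\<And>x y. dist (f x) (f y) = r * dist x y"
  defines "g \<equiv> \<lambda>x. (1/r) *\<^sub>R (f x - f 0)"
  shows "linear g" "\<And>x. norm (g x) = norm x"
proof -
  have gd: "norm (g x - g y) = norm (x - y)" for x y
  proof -
    have "g x - g y = (1/r) *\<^sub>R (f x - f y)" by (simp add: g_def algebra_simps)
    then show ?thesis using d[of x y] r by (simp add: dist_norm)
  qed
  have g0: "g 0 = 0" by (simp add: g_def)
  show gn: "norm (g x) = norm x" for x using gd[of x 0] g0 by simp
  have gi: "inner (g x) (g y) = inner x y" for x y
  proof -
    have "norm (g x - g y)^2 = norm (x - y)^2" using gd by simp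
    then have "inner (g x - g y) (g x - g y) = inner (x - y) (x - y)" by (simp add: power2_norm_eq_inner)
    moreover have "inner (g x) (g x) = inner x x" "inner (g y) (g y) = inner y y"
      using gn[of x] gn[of y] by (simp_all add: power2_norm_eq_inner[symmetric])
    ultimately show ?thesis by (simp add: inner_diff_left inner_diff_right inner_commute)
  qed
  have add: "g (x + y) = g x + g y" for x y
  proof -
    have "inner (g (x+y) - g x - g y) (g (x+y) - g x - g y) = inner ((x+y) - x - y) ((x+y) - x - y)"
      by (simp only: inner_diff_left inner_diff_right gi)
    then have "g (x + y) - g x = g y" by simp
    then show ?thesis by (metis diff_eq_eq add.commute)
  qed
  have sc: "g (c *\<^sub>R x) = c *\<^sub>R g x" for c x
  proof -
    have "inner (g (c *\<^sub>R x) - c *\<^sub>R g x) (g (c *\<^sub>R x) - c *\<^sub>R g x) = inner (c *\<^sub>R x - c *\<^sub>R x) (c *\<^sub>R x - c *\<^sub>R x)"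
      apply (simp only: inner_diff_left inner_diff_right inner_scaleR_left inner_scaleR_right gi)
      by (simp add: algebra_simps)
    then show ?thesis by simp
  qed
  show "linear g" by (rule linearI[OF add sc])
qed

lemma sim_affine:
  fixes f :: "'a::euclidean_space \<Rightarrow> 'a"
  assumes r: "r > 0" and d: "\<And>x y. dist (f x) (f y) = r * dist x y"
  shows "f (a + u *\<^sub>R (b - a)) = f a + u *\<^sub>R (f b - f a)" and "surj f"
proof -
  define g where "g = (\<lambda>x. (1/r) *\<^sub>R (f x - f 0))"
  have lg: "linear g" and gn: "\<And>x. norm (g x) = norm x"
    using sim_linear_part[OF r d] unfolding g_def by auto
  have fe: "f x = f 0 + r *\<^sub>R g x" for x using r by (simp add: g_def)
  show "f (a + u *\<^sub>R (b - a)) = f a + u *\<^sub>R (f b - f a)"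
  proof -
    have "g (a + u *\<^sub>R (b - a)) = g a + u *\<^sub>R (g b - g a)"
      using lg by (simp add: linear_add linear_diff linear_scale)
    then have "f (a + u *\<^sub>R (b - a)) = f 0 + r *\<^sub>R (g a + u *\<^sub>R (g b - g a))"
      using fe[of "a + u *\<^sub>R (b - a)"] by simp
    also have "\<dots> = (f 0 + r *\<^sub>R g a) + u *\<^sub>R ((f 0 + r *\<^sub>R g b) - (f 0 + r *\<^sub>R g a))"
      by (simp add: algebra_simps)
    finally show ?thesis using fe[of a] fe[of b] by simp
  qed
  have "inj g"
  proof (rule injI)
    fix x y assume "g x = g y"
    then have "g (x - y) = 0" using lg by (simp add: linear_diff)
    then have "norm (x - y) = 0" using gn[of "x - y"] by simp
    then show "x = y" by simp
  qed
  then have "surj g" using lg linear_injective_imp_surjective by blast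
  show "surj f"
    unfolding surj_def
  proof
    fix y
    obtain x where "g x = (1/r) *\<^sub>R (y - f 0)" using \<open>surj g\<close> by (metis surjD)
    then have "f x = y" using r fe[of x] by simp
    then show "\<exists>x. y = f x" by metis
  qed
qed


locale ifs =
  fixes m :: nat and \<phi> :: "nat \<Rightarrow> 'a::euclidean_space \<Rightarrow> 'a" and F :: "'a set" and r :: "nat \<Rightarrow> real"
  assumes m1: "m \<ge> 1"
    and rpos: "\<And>i. i < m \<Longrightarrow> 0 < r i" and rlt1: "\<And>i. i < m \<Longrightarrow> r i < 1"
    and sim: "\<And>i x y. i < m \<Longrightarrow> dist (\<phi> i x) (\<phi> i y) = r i * dist x y"
    and Fne: "F \<noteq> {}" and Fcomp: "compact F" and Feq: "F = (\<Union>i<m. \<phi> i ` F)"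
    and ssc: "\<And>i j. i < m \<Longrightarrow> j < m \<Longrightarrow> i \<noteq> j \<Longrightarrow> \<phi> i ` F \<inter> \<phi> j ` F = {}"
begin

fun phiw :: "nat list \<Rightarrow> 'a \<Rightarrow> 'a" where
  "phiw [] = id" | "phiw (i # w) = \<phi> i \<circ> phiw w"

fun rw :: "nat list \<Rightarrow> real" where
  "rw [] = 1" | "rw (i # w) = r i * rw w"

definition wd :: "nat list \<Rightarrow> bool" where "wd w \<longleftrightarrow> set w \<subseteq> {..<m}"

definition rho where "rho = Min (r ` {..<m})"
definition lam where "lam = Max (r ` {..<m})"

lemma rho_pos: "rho > 0" and rho_le: "i < m \<Longrightarrow> rho \<le> r i"
  and lam_lt: "lam < 1" and lam_ge: "i < m \<Longrightarrow> r i \<le> lam" and lam_pos: "lam > 0"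
proof -
  have "0 \<in> {..<m}" using m1 by simp
  then have ne: "r ` {..<m} \<noteq> {}" by blast
  show "rho > 0" unfolding rho_def using ne rpos by (subst Min_gr_iff) auto
  show "i < m \<Longrightarrow> rho \<le> r i" unfolding rho_def by (rule Min_le) auto
  show "lam < 1" unfolding lam_def using ne rlt1 by (subst Max_less_iff) auto
  show "i < m \<Longrightarrow> r i \<le> lam" unfolding lam_def by (rule Max_ge) auto
  have "0 < m" using m1 by simp
  moreover have "r 0 \<le> lam" unfolding lam_def using \<open>0 < m\<close> by (intro Max_ge) auto
  ultimately show "lam > 0" using rpos[of 0] by (meson less_le_trans)
qed

lemma wd_simps[simp]: "wd []" "wd (i # w) \<longleftrightarrow> i < m \<and> wd w" "wd (w @ v) \<longleftrightarrow> wd w \<and> wd v"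
  by (auto simp: wd_def)

lemma phiw_dist: "wd w \<Longrightarrow> dist (phiw w x) (phiw w y) = rw w * dist x y"
  by (induction w arbitrary: x y) (auto simp: sim)

lemma rw_pos: "wd w \<Longrightarrow> 0 < rw w"
  by (induction w) (auto simp: rpos)

lemma rw_le_lam: "wd w \<Longrightarrow> rw w \<le> lam ^ length w"
proof (induction w)
  case (Cons i w)
  then show ?case using lam_ge[of i] rpos[of i] rw_pos[of w]
    by (auto intro!: mult_mono)
qed simp

lemma rw_le1: "wd w \<Longrightarrow> rw w \<le> 1"
  using rw_le_lam[of w] lam_lt lam_pos by (meson less_le power_le_one order_trans)

lemma phiw_snoc: "phiw (w @ [i]) = phiw w \<circ> \<phi> i"
  by (induction w) auto

lemma rw_snoc: "rw (w @ [i]) = rw w * r i"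
  by (induction w) auto

lemma phi_sub: "i < m \<Longrightarrow> \<phi> i ` F \<subseteq> F"
  using Feq by blast

lemma phiw_sub: "wd w \<Longrightarrow> phiw w ` F \<subseteq> F"
proof (induction w)
  case (Cons i w)
  then have "phiw (i # w) ` F \<subseteq> \<phi> i ` F" by (auto simp: image_comp[symmetric])
  then show ?case using phi_sub Cons by auto
qed simp

lemma phi_cont: "i < m \<Longrightarrow> continuous_on UNIV (\<phi> i)"
  by (rule lipschitz_on_continuous_on[of "r i"], rule lipschitz_onI) (auto simp: sim less_imp_le rpos)

lemma phi_compact: "i < m \<Longrightarrow> compact (\<phi> i ` F)"
  using phi_cont Fcomp by (meson compact_continuous_image continuous_on_subset subset_UNIV)

lemma delta0: "\<exists>d>0. \<forall>i<m. \<forall>j<m. i \<noteq> j \<longrightarrow> (\<forall>x\<in>\<phi> i ` F. \<forall>y\<in>\<phi> j ` F. d \<le> dist x y)"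
proof -
  define P where "P = {(i,j). i < m \<and> j < m \<and> i \<noteq> j}"
  have fP: "finite P" unfolding P_def by (rule finite_subset[of _ "{..<m} \<times> {..<m}"]) auto
  have "\<forall>p\<in>P. \<exists>d>0. \<forall>x\<in>\<phi> (fst p) ` F. \<forall>y\<in>\<phi> (snd p) ` F. d \<le> dist x y"
  proof
    fix p assume "p \<in> P"
    then obtain i j where ij: "p = (i,j)" "i<m" "j<m" "i\<noteq>j" unfolding P_def by auto
    show "\<exists>d>0. \<forall>x\<in>\<phi> (fst p) ` F. \<forall>y\<in>\<phi> (snd p) ` F. d \<le> dist x y"
      using separate_compact_closed[OF phi_compact[of i] compact_imp_closed[OF phi_compact[of j]] ssc[of i j]] ij
      by simp
  qed
  then obtain D where D: "\<And>p. p \<in> P \<Longrightarrow> D p > 0 \<and> (\<forall>x\<in>\<phi> (fst p) ` F. \<forall>y\<in>\<phi> (snd p) ` F. D p \<le> dist x y)"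
    by (metis (no_types))
  define d where "d = Min (insert 1 (D ` P))"
  have "d > 0" unfolding d_def using fP D by (subst Min_gr_iff) auto
  moreover have "d \<le> D p" if "p \<in> P" for p unfolding d_def using fP that by (intro Min_le) auto
  ultimately have "d > 0 \<and> (\<forall>p\<in>P. \<forall>x\<in>\<phi> (fst p) ` F. \<forall>y\<in>\<phi> (snd p) ` F. d \<le> dist x y)"
    using D by (meson order_trans)
  then show ?thesis unfolding P_def by auto
qed

definition d0 where "d0 = (SOME d. d > 0 \<and> (\<forall>i<m. \<forall>j<m. i \<noteq> j \<longrightarrow> (\<forall>x\<in>\<phi> i ` F. \<forall>y\<in>\<phi> j ` F. d \<le> dist x y)))"

lemma d0: "d0 > 0" "\<And>i j x y. i < m \<Longrightarrow> j < m \<Longrightarrow> i \<noteq> j \<Longrightarrow> x \<in> \<phi> i ` F \<Longrightarrow> y \<in> \<phi> j ` F \<Longrightarrow> d0 \<le> dist x y"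
  using someI_ex[OF delta0] unfolding d0_def by blast+

lemma separation:
  assumes "wd w" "x \<in> phiw w ` F" "y \<in> F" "y \<notin> phiw w ` F"
  shows "d0 * rw w \<le> dist x y"
  using assms
proof (induction w arbitrary: x y)
  case Nil then show ?case by simp
next
  case (Cons i w)
  then have im: "i < m" and wdw: "wd w" by auto
  from Cons.prems(2) obtain x' where x': "x' \<in> phiw w ` F" "x = \<phi> i x'" by auto
  have "y \<in> (\<Union>i<m. \<phi> i ` F)" using Cons.prems(3) Feq by blast
  then obtain j y' where j: "j < m" "y' \<in> F" "y = \<phi> j y'" by blast
  show ?case
  proof (cases "j = i")
    case False
    have "x \<in> \<phi> i ` F" using x' phiw_sub[OF wdw] by auto
    then have "d0 \<le> dist x y" using d0(2)[OF im j(1) False[symmetric]] j by auto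
    moreover have "rw (i#w) \<le> 1" using rw_le1 Cons.prems(1) by blast
    ultimately show ?thesis using d0(1) by (meson less_imp_le mult_left_le order_trans)
  next
    case True
    have "y' \<notin> phiw w ` F" using Cons.prems(4) j True by (auto simp: image_comp[symmetric])
    then have "d0 * rw w \<le> dist x' y'" using Cons.IH[OF wdw x'(1) j(2)] by blast
    then have "r i * (d0 * rw w) \<le> r i * dist x' y'" using rpos[OF im] by simp
    then show ?thesis using sim[OF im, of x' y'] x' j True by (simp add: mult_ac)
  qed
qed

lemma address:
  assumes "x \<in> F" "0 < t" "t \<le> 1"
  shows "\<exists>w. wd w \<and> x \<in> phiw w ` F \<and> t \<le> rw w \<and> rw w * rho < t"
proof -
  define Q where "Q = (\<lambda>w. wd w \<and> x \<in> phiw w ` F \<and> t \<le> rw w)"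
  obtain N where N: "lam ^ N < t" using real_arch_pow_inv[OF assms(2) lam_lt] by blast
  have bnd: "length w \<le> N" if "Q w" for w
  proof (rule ccontr)
    assume "\<not> length w \<le> N"
    then have "lam ^ length w \<le> lam ^ N" using lam_pos lam_lt by (intro power_decreasing) auto
    then show False using that rw_le_lam[of w] N unfolding Q_def by linarith
  qed
  have "Q []" unfolding Q_def using assms by auto
  then have P0: "\<exists>w. length w = 0 \<and> Q w" by (intro exI[of _ "[]"]) simp
  have Pb: "\<forall>y. (\<exists>w. length w = y \<and> Q w) \<longrightarrow> y \<le> N" using bnd by blast
  obtain n where n: "\<exists>w. length w = n \<and> Q w" "\<forall>k. (\<exists>w. length w = k \<and> Q w) \<longrightarrow> k \<le> n"
    using Nat.ex_has_greatest_nat[of "\<lambda>k. \<exists>w. length w = k \<and> Q w", OF P0 Pb] by blast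
  then obtain w where w: "length w = n" "Q w" by blast
  then obtain y where y: "y \<in> F" "x = phiw w y" unfolding Q_def by auto
  then have "y \<in> (\<Union>i<m. \<phi> i ` F)" using Feq by blast
  then obtain i z where iz: "i < m" "z \<in> F" "y = \<phi> i z" by blast
  have xin: "x \<in> phiw (w @ [i]) ` F" using y iz by (simp add: phiw_snoc)
  have "\<not> Q (w @ [i])"
  proof
    assume "Q (w @ [i])"
    then have "Suc n \<le> n" using n(2) w(1) by (metis length_append_singleton)
    then show False by simp
  qed
  then have "rw w * r i < t" using xin w iz unfolding Q_def by (simp add: rw_snoc)
  moreover have "rw w * rho \<le> rw w * r i" using rho_le[OF iz(1)] rw_pos[of w] w(2) unfolding Q_def by simp
  ultimately show ?thesis using w unfolding Q_def by auto
qed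

end

context ifs begin

lemma inj_phi: "i < m \<Longrightarrow> inj (\<phi> i)"
  by (rule injI) (metis sim rpos dist_eq_0_iff mult_eq_0_iff less_irrefl)

lemma conn_step:
  assumes "connected C" "C \<subseteq> F" "x \<in> C" "y \<in> C"
  shows "\<exists>C' x' y'. connected C' \<and> C' \<subseteq> F \<and> x' \<in> C' \<and> y' \<in> C' \<and> dist x y / lam \<le> dist x' y'"
proof -
  have "x \<in> (\<Union>i<m. \<phi> i ` F)" using assms Feq by blast
  then obtain i where i: "i < m" "x \<in> \<phi> i ` F" by blast
  define B where "B = (\<Union>j\<in>{..<m}-{i}. \<phi> j ` F)"
  have cB: "closed B" unfolding B_def using phi_compact compact_imp_closed by (intro closed_UN) auto
  have cA: "closed (\<phi> i ` F)" using phi_compact[OF i(1)] compact_imp_closed by blast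
  have AB: "\<phi> i ` F \<inter> B = {}" unfolding B_def using ssc i(1) by auto
  have CAB: "C \<subseteq> \<phi> i ` F \<union> B" using assms(2) Feq unfolding B_def by blast
  have "\<not> (B \<inter> C \<noteq> {})"
    using assms(1)[unfolded connected_closed] cA cB AB CAB i(2) assms(3) by blast
  then have CA: "C \<subseteq> \<phi> i ` F" using CAB by blast
  define g where "g = inv_into F (\<phi> i)"
  have injF: "inj_on (\<phi> i) F" using inj_phi[OF i(1)] by (meson inj_on_subset subset_UNIV)
  have gc: "continuous_on (\<phi> i ` F) g" unfolding g_def
    using continuous_on_inv[OF continuous_on_subset[OF phi_cont[OF i(1)]] Fcomp] injF by auto
  have conn: "connected (g ` C)" using connected_continuous_image[OF continuous_on_subset[OF gc CA] assms(1)] .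
  have sub: "g ` C \<subseteq> F" unfolding g_def using CA by (auto intro: inv_into_into)
  have gx: "\<phi> i (g x) = x" "\<phi> i (g y) = y" unfolding g_def using CA assms(3,4) by (auto intro: f_inv_into_f)
  have "dist x y = r i * dist (g x) (g y)" using sim[OF i(1), of "g x" "g y"] gx by simp
  moreover have "r i \<le> lam" "0 < r i" using lam_ge rpos i(1) by auto
  ultimately have "dist x y / lam \<le> dist (g x) (g y)"
    using lam_pos by (simp add: divide_le_eq mult.commute mult_right_mono)
  then show ?thesis using conn sub assms(3,4) by blast
qed

lemma no_segment:
  assumes "a \<noteq> b" shows "\<not> closed_segment a b \<subseteq> F"
proof
  assume S: "closed_segment a b \<subseteq> F"
  define d where "d = dist a b"
  have d: "d > 0" using assms by (simp add: d_def)
  have it: "\<exists>C x y. connected C \<and> C \<subseteq> F \<and> x \<in> C \<and> y \<in> C \<and> d / lam ^ n \<le> dist x y" for n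
  proof (induction n)
    case 0
    show ?case using S by (intro exI[of _ "closed_segment a b"] exI[of _ a] exI[of _ b]) (auto simp: d_def)
  next
    case (Suc n)
    then obtain C x y where C: "connected C" "C \<subseteq> F" "x \<in> C" "y \<in> C" "d / lam ^ n \<le> dist x y" by blast
    from conn_step[OF C(1-4)] obtain C' x' y' where C': "connected C'" "C' \<subseteq> F" "x' \<in> C'" "y' \<in> C'"
      "dist x y / lam \<le> dist x' y'" by blast
    have "d / lam ^ Suc n = (d / lam ^ n) / lam" by (simp add: field_simps)
    also have "\<dots> \<le> dist x y / lam" using C(5) lam_pos by (intro divide_right_mono) auto
    finally show ?case using C' by (meson order_trans)
  qed
  obtain B where B: "\<And>x y. x \<in> F \<Longrightarrow> y \<in> F \<Longrightarrow> dist x y \<le> B" "B > 0"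
  proof -
    obtain B0 where B0: "\<And>x y. x \<in> F \<Longrightarrow> y \<in> F \<Longrightarrow> dist x y \<le> B0"
      using compact_imp_bounded[OF Fcomp] unfolding bounded_two_points by blast
    show ?thesis
      by (rule that[of "max B0 1"]) (use B0 in \<open>auto intro: le_max_iff_disj[THEN iffD2]\<close>)
  qed
  obtain n where n: "lam ^ n < d / B" using real_arch_pow_inv[of "d/B" lam] d B(2) lam_lt by auto
  obtain C x y where C: "C \<subseteq> F" "x \<in> C" "y \<in> C" "d / lam ^ n \<le> dist x y" using it[of n] by blast
  have "B < d / lam ^ n" using n lam_pos B(2) by (simp add: field_simps)
  then show False using B(1)[of x y] C by auto
qed

end


definition pt :: "'a::real_vector \<Rightarrow> 'a \<Rightarrow> real \<Rightarrow> 'a" where "pt a b t = a + t *\<^sub>R (b - a)"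
definition piece :: "'a::real_vector \<Rightarrow> 'a \<Rightarrow> nat \<Rightarrow> nat \<Rightarrow> 'a set" where
  "piece a b K k = pt a b ` {real k / real K .. real (Suc k) / real K}"

lemma dist_pt: fixes a b :: "'a::real_normed_vector" shows "dist (pt a b s) (pt a b t) = \<bar>s - t\<bar> * dist a b"
proof -
  have "pt a b s - pt a b t = (s - t) *\<^sub>R (b - a)" by (simp add: pt_def algebra_simps)
  then have "dist (pt a b s) (pt a b t) = norm ((s - t) *\<^sub>R (b - a))" by (simp add: dist_norm)
  also have "\<dots> = \<bar>s - t\<bar> * dist a b" by (simp add: dist_norm norm_minus_commute)
  finally show ?thesis .
qed

lemma closed_segment_pt: "closed_segment a b = pt a b ` {0..1}"
  unfolding closed_segment_image_interval pt_def by (rule image_cong) (auto simp: algebra_simps)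

lemma piece_cover:
  assumes "0 \<le> t" "t \<le> 1" "K \<ge> 1"
  shows "\<exists>k<K. real k / real K \<le> t \<and> t \<le> real (Suc k) / real K"
proof -
  define k where "k = min (nat \<lfloor>t * K\<rfloor>) (K - 1)"
  have Kp: "real K > 0" using assms by simp
  have "k < K" unfolding k_def using assms by auto
  moreover have "real k \<le> t * K"
  proof -
    have "real (nat \<lfloor>t * K\<rfloor>) \<le> t * K" using assms by (simp add: of_nat_floor)
    then show ?thesis unfolding k_def by linarith
  qed
  moreover have "t * K \<le> real (Suc k)"
  proof (cases "nat \<lfloor>t * K\<rfloor> \<le> K - 1")
    case True
    then have "k = nat \<lfloor>t * K\<rfloor>" unfolding k_def by simp
    moreover have "t * K < real (nat \<lfloor>t * K\<rfloor>) + 1" using assms by linarith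
    ultimately show ?thesis by simp
  next
    case False
    then have "k = K - 1" unfolding k_def by simp
    then have "real (Suc k) = K" using assms by simp
    then show ?thesis using assms Kp by (simp add: mult_left_le)
  qed
  ultimately show ?thesis using Kp by (auto simp: field_simps)
qed

context ifs begin

lemma F_bounded_norm: "\<exists>R. \<forall>x\<in>F. norm x \<le> R"
  using compact_imp_bounded[OF Fcomp] by (simp add: bounded_iff)

lemma gap:
  assumes al: "0 < \<alpha>" "\<alpha> \<le> \<beta>"
  shows "\<exists>K\<ge>2. \<forall>a b. \<alpha> \<le> dist a b \<longrightarrow> dist a b \<le> \<beta> \<longrightarrow> (\<exists>k<K. piece a b K k \<inter> F = {})"
proof (rule ccontr)
  assume nt: "\<not> ?thesis"
  have "\<forall>n. \<exists>ab. \<alpha> \<le> dist (fst ab) (snd ab) \<and> dist (fst ab) (snd ab) \<le> \<beta> \<and>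
      (\<forall>k<n+2. piece (fst ab) (snd ab) (n+2) k \<inter> F \<noteq> {})"
  proof
    fix n :: nat
    have "\<not> (\<forall>a b. \<alpha> \<le> dist a b \<longrightarrow> dist a b \<le> \<beta> \<longrightarrow> (\<exists>k<n+2. piece a b (n+2) k \<inter> F = {}))"
      using nt le_add2[of 2 n] by (simp only: add.commute[of n 2]) blast
    then obtain a b where "\<alpha> \<le> dist a b" "dist a b \<le> \<beta>" "\<forall>k<n+2. piece a b (n+2) k \<inter> F \<noteq> {}"
      by blast
    then show "\<exists>ab. \<alpha> \<le> dist (fst ab) (snd ab) \<and> dist (fst ab) (snd ab) \<le> \<beta> \<and>
      (\<forall>k<n+2. piece (fst ab) (snd ab) (n+2) k \<inter> F \<noteq> {})" by (intro exI[of _ "(a,b)"]) simp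
  qed
  then obtain AB where AB: "\<And>n. \<alpha> \<le> dist (fst (AB n)) (snd (AB n))" "\<And>n. dist (fst (AB n)) (snd (AB n)) \<le> \<beta>"
      "\<And>n k. k < n + 2 \<Longrightarrow> piece (fst (AB n)) (snd (AB n)) (n+2) k \<inter> F \<noteq> {}"
    by (metis (no_types))
  define A where "A n = fst (AB n)" for n
  define B where "B n = snd (AB n)" for n
  obtain R where R: "\<And>x. x \<in> F \<Longrightarrow> norm x \<le> R" using F_bounded_norm by blast
  have nA: "norm (A n) \<le> R + \<beta>" for n
  proof -
    obtain z where z: "z \<in> piece (A n) (B n) (n+2) 0" "z \<in> F" using AB(3)[of 0 n] unfolding A_def B_def by auto
    then obtain t where t: "0 \<le> t" "t \<le> 1 / real (n+2)" "z = pt (A n) (B n) t" unfolding piece_def by auto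
    have "1 / real (n+2) \<le> 1" by simp
    then have "t \<le> 1" using t(2) by linarith
    have "dist (A n) z = t * dist (A n) (B n)" using dist_pt[of "A n" "B n" 0 t] t by (simp add: pt_def)
    also have "\<dots> \<le> \<beta>" using AB(2)[of n] \<open>t \<le> 1\<close> t(1) unfolding A_def B_def
      by (smt (verit) mult_left_le_one_le zero_le_dist)
    finally have "dist (A n) z \<le> \<beta>" .
    then show ?thesis using R[OF z(2)] by (smt (verit) dist_norm norm_triangle_sub)
  qed
  have nB: "norm (B n) \<le> R + 2 * \<beta>" for n
    using nA[of n] AB(2)[of n] unfolding A_def B_def by (smt (verit) dist_norm norm_triangle_sub norm_minus_commute)
  have "bounded (range AB)"
  proof -
    have "range AB \<subseteq> cball 0 (R + \<beta>) \<times> cball 0 (R + 2 * \<beta>)"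
    proof
      fix p assume "p \<in> range AB"
      then obtain n where "p = AB n" by blast
      then show "p \<in> cball 0 (R + \<beta>) \<times> cball 0 (R + 2 * \<beta>)"
        using nA[of n] nB[of n] unfolding A_def B_def by (simp add: mem_Times_iff)
    qed
    moreover have "bounded (cball (0::'a) (R + \<beta>) \<times> cball (0::'a) (R + 2 * \<beta>))"
      by (intro bounded_Times bounded_cball)
    ultimately show ?thesis using bounded_subset by blast
  qed
  then obtain l s where s: "strict_mono s" "((AB \<circ> s) \<longlongrightarrow> l) sequentially"
    using bounded_imp_convergent_subsequence by blast
  define a where "a = fst l"
  define b where "b = snd l"
  have Aa: "(\<lambda>n. A (s n)) \<longlonglongrightarrow> a" unfolding A_def a_def using tendsto_fst[OF s(2)] by (simp add: o_def)
  have Bb: "(\<lambda>n. B (s n)) \<longlonglongrightarrow> b" unfolding B_def b_def using tendsto_snd[OF s(2)] by (simp add: o_def)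
  have "\<alpha> \<le> dist a b"
    by (rule tendsto_le[OF _ tendsto_dist[OF Aa Bb] tendsto_const]) (simp_all add: A_def B_def AB(1))
  then have ab: "a \<noteq> b" using al by auto
  have "closed_segment a b \<subseteq> F"
  proof
    fix z assume "z \<in> closed_segment a b"
    then obtain t where t: "0 \<le> t" "t \<le> 1" "z = pt a b t" unfolding closed_segment_pt by auto
    have conv: "(\<lambda>n. pt (A (s n)) (B (s n)) t) \<longlonglongrightarrow> z"
      unfolding t(3) pt_def by (intro tendsto_intros Aa Bb)
    have bnd: "infdist (pt (A (s n)) (B (s n)) t) F \<le> \<beta> / real (Suc n)" for n
    proof -
      define K where "K = s n + 2"
      have K1: "K \<ge> 1" unfolding K_def by simp
      obtain k where k: "k < K" "real k / real K \<le> t" "t \<le> real (Suc k) / real K"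
        using piece_cover[OF t(1,2) K1] by blast
      obtain w where w: "w \<in> piece (A (s n)) (B (s n)) K k" "w \<in> F"
        using AB(3)[of k "s n"] k(1) unfolding A_def B_def K_def by auto
      then obtain u where u: "real k / real K \<le> u" "u \<le> real (Suc k) / real K" "w = pt (A (s n)) (B (s n)) u"
        unfolding piece_def by auto
      have "\<bar>t - u\<bar> \<le> 1 / real K"
      proof -
        have "real (Suc k) / real K - real k / real K = 1 / real K" using K1 by (simp add: field_simps)
        then show ?thesis using k u by linarith
      qed
      moreover have "s n \<ge> n" using s(1) by (simp add: seq_suble)
      then have "1 / real K \<le> 1 / real (Suc n)" unfolding K_def by (simp add: frac_le)
      ultimately have tu: "\<bar>t - u\<bar> \<le> 1 / real (Suc n)" by linarith
      have "dist (pt (A (s n)) (B (s n)) t) w = \<bar>t - u\<bar> * dist (A (s n)) (B (s n))"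
        using dist_pt u(3) by simp
      also have "\<dots> \<le> (1 / real (Suc n)) * \<beta>"
        using AB(2)[of "s n"] tu unfolding A_def B_def by (intro mult_mono) auto
      finally show ?thesis using w(2) by (intro infdist_le2) auto
    qed
    have lim0: "(\<lambda>n. \<beta> / real (Suc n)) \<longlonglongrightarrow> 0"
      using LIMSEQ_Suc[OF lim_const_over_n[of \<beta>]] by simp
    have ev: "\<forall>\<^sub>F n in sequentially. infdist (pt (A (s n)) (B (s n)) t) F \<le> \<beta> / real (Suc n)"
      using bnd by (intro always_eventually) blast
    have "infdist z F \<le> 0"
      by (rule tendsto_le[OF _ lim0 tendsto_infdist[OF conv] ev]) simp
    then have "infdist z F = 0" using infdist_nonneg[of z F] by linarith
    then show "z \<in> F" using in_closed_iff_infdist_zero[OF compact_imp_closed[OF Fcomp] Fne] by simp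
  qed
  then show False using no_segment[OF ab] by simp
qed

end


lemma piece_sub: "k < K \<Longrightarrow> piece a b K k \<subseteq> pt a b ` {0..1}"
  unfolding piece_def by (intro image_mono) (auto simp: field_simps)

lemma dist_seg: fixes a b :: "'a::real_normed_vector"
  assumes "x \<in> pt a b ` {0..1}" "y \<in> pt a b ` {0..1}" shows "dist x y \<le> dist a b"
proof -
  obtain s t where "s \<in> {0..1}" "t \<in> {0..1}" "x = pt a b s" "y = pt a b t" using assms by auto
  then show ?thesis using dist_pt[of a b s t] by (simp add: mult_left_le_one_le abs_le_iff)
qed

context ifs begin

lemma porous: "\<exists>K\<ge>2. \<exists>l0>0. \<forall>a b. 0 < dist a b \<longrightarrow> dist a b \<le> l0 \<longrightarrow> (\<exists>k<K. piece a b K k \<inter> F = {})"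
proof -
  have r01: "rho < 1" using rho_le[of 0] rlt1[of 0] m1 by simp
  have "rho * d0 / 2 \<le> d0 / 2" using r01 d0(1) by simp
  then obtain K where K: "K \<ge> 2"
    "\<And>a b. rho * d0 / 2 \<le> dist a b \<Longrightarrow> dist a b \<le> d0 / 2 \<Longrightarrow> \<exists>k<K. piece a b K k \<inter> F = {}"
    using gap[of "rho * d0 / 2" "d0 / 2"] rho_pos d0(1) by auto
  have "\<exists>k<K. piece a b K k \<inter> F = {}" if ab: "0 < dist a b" "dist a b \<le> d0 / 2" for a b
  proof (cases "pt a b ` {0..1} \<inter> F = {}")
    case True
    then show ?thesis using piece_sub[of 0 K a b] K(1) by (intro exI[of _ 0]) auto
  next
    case False
    then obtain x where x: "x \<in> pt a b ` {0..1}" "x \<in> F" by blast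
    define l where "l = dist a b"
    define t where "t = 2 * l / d0"
    have t: "0 < t" "t \<le> 1" using ab d0(1) unfolding t_def l_def by (auto simp: field_simps)
    obtain w where w: "wd w" "x \<in> phiw w ` F" "t \<le> rw w" "rw w * rho < t"
      using address[OF x(2) t] by blast
    have rw0: "0 < rw w" using rw_pos[OF w(1)] .
    have inw: "y \<in> phiw w ` F" if "y \<in> F" "y \<in> pt a b ` {0..1}" for y
    proof (rule ccontr)
      assume "y \<notin> phiw w ` F"
      then have "d0 * rw w \<le> dist x y" using separation[OF w(1,2) that(1)] by blast
      moreover have "dist x y \<le> l" unfolding l_def using dist_seg x(1) that(2) by blast
      moreover have "d0 * t \<le> d0 * rw w" using w(3) d0(1) by simp
      moreover have "d0 * t = 2 * l" unfolding t_def using d0(1) by simp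
      ultimately show False using ab unfolding l_def by linarith
    qed
    have simw: "\<And>x y. dist (phiw w x) (phiw w y) = rw w * dist x y" using phiw_dist[OF w(1)] .
    obtain a' where a': "phiw w a' = a" using sim_affine(2)[OF rw0 simw] by (metis surjD)
    obtain b' where b': "phiw w b' = b" using sim_affine(2)[OF rw0 simw] by (metis surjD)
    have ptw: "phiw w (pt a' b' s) = pt a b s" for s
      unfolding pt_def using sim_affine(1)[OF rw0 simw] a' b' by simp
    have dab: "dist a b = rw w * dist a' b'" using simw[of a' b'] a' b' by simp
    have "rho * d0 / 2 \<le> dist a' b'"
    proof -
      have "rw w * rho * d0 < t * d0" using w(4) d0(1) by simp
      also have "\<dots> = 2 * dist a b" unfolding t_def l_def using d0(1) by simp
      finally have "rw w * (rho * d0 / 2) < rw w * dist a' b'" using dab by (simp add: algebra_simps)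
      then show ?thesis using rw0 by simp
    qed
    moreover have "dist a' b' \<le> d0 / 2"
    proof -
      have "2 * dist a b \<le> rw w * d0" using w(3) d0(1) unfolding t_def l_def by (simp add: field_simps)
      then have "rw w * (2 * dist a' b') \<le> rw w * d0" using dab by (simp add: algebra_simps)
      then show ?thesis using rw0 by simp
    qed
    ultimately obtain k where k: "k < K" "piece a' b' K k \<inter> F = {}" using K(2) by blast
    have "piece a b K k \<inter> F = {}"
    proof (rule ccontr)
      assume "piece a b K k \<inter> F \<noteq> {}"
      then obtain z where z: "z \<in> piece a b K k" "z \<in> F" by blast
      then obtain s where s: "s \<in> {real k / real K .. real (Suc k) / real K}" "z = pt a b s"
        unfolding piece_def by auto
      have "z \<in> pt a b ` {0..1}" using piece_sub[OF k(1)] z(1) by blast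
      then obtain y where y: "y \<in> F" "z = phiw w y" using inw z(2) by blast
      have "phiw w y = phiw w (pt a' b' s)" using y s ptw by simp
      then have "dist y (pt a' b' s) = 0" using simw[of y "pt a' b' s"] rw0 by simp
      then have "pt a' b' s \<in> F" using y by simp
      moreover have "pt a' b' s \<in> piece a' b' K k" using s unfolding piece_def by blast
      ultimately show False using k(2) by blast
    qed
    then show ?thesis using k(1) by blast
  qed
  then show ?thesis using K(1) d0(1) by (intro exI[of _ K] conjI exI[of _ "d0/2"]) auto
qed

end


lemma pt_pt: "pt (pt a b s1) (pt a b s2) u = pt a b (s1 + u * (s2 - s1))"
  by (simp add: pt_def algebra_simps)

lemma piece_child:
  assumes N: "N > 0" and K: "K > 0"
  shows "piece a b (N*K) (j*K+k) = piece (pt a b (real j / real N)) (pt a b (real (j+1) / real N)) K k"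
proof -
  have "piece (pt a b (real j / real N)) (pt a b (real (j+1) / real N)) K k
      = (\<lambda>u. pt a b ((1/N) * u + j/N)) ` {real k / real K .. real (Suc k) / real K}"
    unfolding piece_def pt_pt
  proof (rule image_cong[OF refl])
    fix u :: real
    show "pt a b (real j / real N + u * (real (j + 1) / real N - real j / real N)) = pt a b (1 / real N * u + real j / real N)"
    proof -
      have e: "real (j + 1) / real N - real j / real N = 1 / real N" by (simp add: diff_divide_distrib[symmetric])
      show ?thesis unfolding e by (simp add: add.commute)
    qed
  qed
  also have "\<dots> = pt a b ` ((\<lambda>u. (1/N) * u + j/N) ` {real k / real K .. real (Suc k) / real K})"
    by (simp add: image_image)
  also have "(\<lambda>u. (1/N) * u + j/N) ` {real k / real K .. real (Suc k) / real K}
      = {real (j*K+k) / real (N*K) .. real (Suc (j*K+k)) / real (N*K)}"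
  proof -
    have ne: "{real k / real K .. real (Suc k) / real K} \<noteq> {}" using K by (simp add: divide_right_mono)
    have e1: "(1/N) * (real k / real K) + j/N = real (j*K+k) / real (N*K)" using N K by (simp add: field_simps)
    have e2: "(1/N) * (real (Suc k) / real K) + j/N = real (Suc (j*K+k)) / real (N*K)" using N K by (simp add: field_simps)
    show ?thesis by (subst image_affinity_atLeastAtMost) (simp only: ne if_False e1 e2, simp)
  qed
  finally show ?thesis unfolding piece_def by simp
qed

lemma piece_parent:
  assumes N: "N > 0" and K: "k < K"
  shows "piece a b (N*K) (j*K+k) \<subseteq> piece a b N j"
proof -
  have Kp: "K > 0" using K by simp
  have i1: "real j / real N \<le> real (j*K+k) / real (N*K)" using N Kp by (simp add: field_simps)
  have "real (Suc (j*K+k)) \<le> real ((Suc j) * K)" using K by simp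
  then have "real (Suc (j*K+k)) / real (N*K) \<le> real ((Suc j) * K) / real (N*K)"
    by (rule divide_right_mono) simp
  also have "\<dots> = real (Suc j) / real N" using Kp by (simp only: of_nat_mult mult_divide_mult_cancel_right of_nat_0_less_iff less_numeral_extra(3) neq0_conv not_gr_zero)
  finally have i2: "real (Suc (j*K+k)) / real (N*K) \<le> real (Suc j) / real N" .
  show ?thesis unfolding piece_def by (intro image_mono) (use i1 i2 in auto)
qed

lemma piece_diam:
  fixes a b :: "'a::euclidean_space"
  assumes N: "N > 0"
  shows "bounded (piece a b N j)" "diameter (piece a b N j) \<le> dist a b / N"
proof -
  have "continuous_on UNIV (pt a b)" unfolding pt_def by (intro continuous_intros)
  then have "compact (piece a b N j)" unfolding piece_def
    by (intro compact_continuous_image) (auto intro: continuous_on_subset)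
  then show "bounded (piece a b N j)" by (rule compact_imp_bounded)
  show "diameter (piece a b N j) \<le> dist a b / N"
  proof (rule diameter_le)
    show "piece a b N j \<noteq> {} \<or> 0 \<le> dist a b / N" by simp
    fix x y assume "x \<in> piece a b N j" "y \<in> piece a b N j"
    then obtain s t where st: "s \<in> {real j / N .. real (Suc j) / N}" "t \<in> {real j / N .. real (Suc j) / N}"
      "x = pt a b s" "y = pt a b t" unfolding piece_def by auto
    have "\<bar>s - t\<bar> \<le> 1 / N"
    proof -
      have "real (Suc j) / N - real j / N = 1 / N" using N by (simp add: field_simps)
      then show ?thesis using st(1,2) by auto
    qed
    then have "\<bar>s - t\<bar> * dist a b \<le> 1 / N * dist a b" by (rule mult_right_mono) simp
    then have "\<bar>s - t\<bar> * dist a b \<le> dist a b / N" by simp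
    then show "norm (x - y) \<le> dist a b / N" using dist_pt[of a b s t] st by (simp add: dist_norm)
  qed
qed

lemma cover_pieces:
  assumes "N > 0" "x \<in> pt a b ` {0..1}" shows "\<exists>j<N. x \<in> piece a b N j"
proof -
  obtain t where t: "0 \<le> t" "t \<le> 1" "x = pt a b t" using assms by auto
  then obtain k where "k < N" "real k / real N \<le> t" "t \<le> real (Suc k) / real N"
    using piece_cover[of t N] assms by auto
  then show ?thesis unfolding piece_def using t by auto
qed



context ifs begin

lemma counting:
  assumes K: "K \<ge> 2" and l0: "l0 > 0"
    and por: "\<And>a b. 0 < dist a b \<Longrightarrow> dist a b \<le> l0 \<Longrightarrow> \<exists>k<K. piece a b K k \<inter> F = {}"
    and ab: "a \<noteq> b" and M: "M \<ge> 1" "dist a b / M \<le> l0"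
  shows "card {j. j < M * K^n \<and> piece a b (M * K^n) j \<inter> F \<noteq> {}} \<le> M * (K - 1)^n"
proof (induction n)
  case 0
  have "{j. j < M * K^0 \<and> piece a b (M * K^0) j \<inter> F \<noteq> {}} \<subseteq> {..<M}" by auto
  then have "card {j. j < M * K^0 \<and> piece a b (M * K^0) j \<inter> F \<noteq> {}} \<le> card {..<M}"
    by (intro card_mono) auto
  then show ?case by simp
next
  case (Suc n)
  define N where "N = M * K^n"
  have Np: "N > 0" unfolding N_def using M K by simp
  have Kp: "K > 0" using K by simp
  define A where "A = {j. j < N \<and> piece a b N j \<inter> F \<noteq> {}}"
  define C where "C j = {k. k < K \<and> piece a b (N*K) (j*K+k) \<inter> F \<noteq> {}}" for j
  have NS: "M * K ^ Suc n = N * K" unfolding N_def by (simp add: mult_ac)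
  have sub: "{j. j < M * K^Suc n \<and> piece a b (M * K^Suc n) j \<inter> F \<noteq> {}} \<subseteq> (\<Union>j\<in>A. (\<lambda>k. j*K+k) ` C j)"
  proof
    fix i assume "i \<in> {j. j < M * K^Suc n \<and> piece a b (M * K^Suc n) j \<inter> F \<noteq> {}}"
    then have i: "i < N * K" "piece a b (N*K) i \<inter> F \<noteq> {}" unfolding NS by auto
    define j where "j = i div K"
    define k where "k = i mod K"
    have ijk: "i = j*K + k" unfolding j_def k_def by simp
    have kK: "k < K" unfolding k_def using Kp by simp
    have jN: "j < N" unfolding j_def using i(1) by (simp add: less_mult_imp_div_less)
    have "piece a b (N*K) i \<subseteq> piece a b N j" unfolding ijk by (rule piece_parent[OF Np kK])
    then have "j \<in> A" unfolding A_def using i(2) jN by blast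
    moreover have "k \<in> C j" unfolding C_def using kK i(2) ijk by simp
    ultimately show "i \<in> (\<Union>j\<in>A. (\<lambda>k. j*K+k) ` C j)" using ijk by blast
  qed
  have cC: "card (C j) \<le> K - 1" for j
  proof -
    define p where "p = pt a b (real j / real N)"
    define q where "q = pt a b (real (j+1) / real N)"
    have "dist p q = dist a b / N" unfolding p_def q_def dist_pt
      by (simp add: diff_divide_distrib[symmetric])
    moreover have "dist a b / N \<le> dist a b / M"
      using M Np unfolding N_def by (intro divide_left_mono) (auto simp: of_nat_mult)
    ultimately have d: "0 < dist p q" "dist p q \<le> l0" using ab Np M by auto
    obtain k0 where k0: "k0 < K" "piece p q K k0 \<inter> F = {}" using por[OF d] by blast
    have "C j \<subseteq> {..<K} - {k0}"
      unfolding C_def using k0 piece_child[OF Np Kp, of a b j] unfolding p_def q_def by auto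
    then have "card (C j) \<le> card ({..<K} - {k0})" by (intro card_mono) auto
    also have "\<dots> = K - 1" using k0(1) by simp
    finally show ?thesis .
  qed
  have fA: "finite A" unfolding A_def by simp
  have "card {j. j < M * K^Suc n \<and> piece a b (M * K^Suc n) j \<inter> F \<noteq> {}} \<le> card (\<Union>j\<in>A. (\<lambda>k. j*K+k) ` C j)"
    by (rule card_mono[OF _ sub]) (use fA in \<open>auto simp: C_def\<close>)
  also have "\<dots> \<le> (\<Sum>j\<in>A. card ((\<lambda>k. j*K+k) ` C j))" by (rule card_UN_le[OF fA])
  also have "\<dots> \<le> (\<Sum>j\<in>A. K - 1)" by (intro sum_mono order_trans[OF card_image_le cC]) (auto simp: C_def)
  also have "\<dots> = card A * (K - 1)" by simp
  also have "\<dots> \<le> M * (K-1)^n * (K - 1)" using Suc.IH unfolding A_def N_def by (intro mult_right_mono) auto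
  also have "\<dots> = M * (K-1)^Suc n" by (simp add: mult_ac)
  finally show ?case .
qed

end


context ifs begin

lemma null_seg:
  assumes ab: "a \<noteq> b"
  shows "\<exists>s. 0 \<le> s \<and> s < 1 \<and> (\<forall>X. X \<subseteq> F \<inter> pt a b ` {0..1} \<longrightarrow> hausdorff_measure s X = 0)"
proof -
  obtain K l0 where K: "K \<ge> 2" and l0: "l0 > 0"
    and por: "\<And>a b. 0 < dist a b \<Longrightarrow> dist a b \<le> l0 \<Longrightarrow> \<exists>k<K. piece a b K k \<inter> F = {}"
    using porous by blast
  define l where "l = dist a b"
  have lp: "l > 0" using ab unfolding l_def by simp
  define M where "M = nat \<lceil>l / l0\<rceil> + 1"
  have M1: "M \<ge> 1" unfolding M_def by simp
  have "l / l0 \<le> real M" unfolding M_def by linarith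
  then have Ml: "l / M \<le> l0" using l0 M1 by (simp add: field_simps)
  define Kr where "Kr = real K"
  have Kr2: "Kr \<ge> 2" unfolding Kr_def using K by simp
  define s where "s = ln (Kr - 1/2) / ln Kr"
  have lnK: "ln Kr > 0" using Kr2 by simp
  have lnK': "ln (Kr - 1/2) > 0" using Kr2 by simp
  have s0: "s > 0" unfolding s_def using lnK lnK' by simp
  have s1: "s < 1" unfolding s_def using lnK Kr2 by (simp add: divide_less_eq)
  have Kpow: "Kr powr s = Kr - 1/2" unfolding powr_def s_def using lnK Kr2 by simp
  define q where "q = (Kr - 1) / (Kr - 1/2)"
  have q: "0 \<le> q" "q < 1" unfolding q_def using Kr2 by (auto simp: divide_less_eq)
  define C where "C = real M * (l / M) powr s"
  define NN where "NN n = M * K^n" for n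
  have NNp: "NN n > 0" for n unfolding NN_def using M1 K by simp
  define A where "A n = {j. j < NN n \<and> piece a b (NN n) j \<inter> F \<noteq> {}}" for n
  have cardA: "card (A n) \<le> M * (K - 1)^n" for n
    unfolding A_def NN_def using counting[OF K l0 por ab M1, of n] Ml l_def by simp
  have T: "real (card (A n)) * (l / NN n) powr s \<le> C * q^n" for n
  proof -
    have e1: "(real K ^ n) powr s = (Kr - 1/2)^n"
    proof -
      have "(real K ^ n) powr s = (Kr powr real n) powr s" unfolding Kr_def using K by (simp add: powr_realpow)
      also have "\<dots> = (Kr powr s) ^ n" using Kr2 by (simp add: powr_powr powr_power mult.commute)
      finally show ?thesis using Kpow by simp
    qed
    have e2: "(l / NN n) powr s = (l / M) powr s / (Kr - 1/2)^n"
    proof -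
      have eq: "l / NN n = (l / M) / (real K ^ n)" unfolding NN_def by simp
      have "(l / NN n) powr s = ((l / M) / (real K ^ n)) powr s" unfolding eq by (rule refl)
      also have "\<dots> = (l / M) powr s / (real K ^ n) powr s" by (rule powr_divide)
      finally show ?thesis using e1 by simp
    qed
    have "real (card (A n)) \<le> real (M * (K - 1)^n)" using cardA[of n] by (simp only: of_nat_le_iff)
    also have "real (M * (K - 1)^n) = real M * (Kr - 1)^n" using K unfolding Kr_def by (simp add: of_nat_diff)
    finally have "real (card (A n)) \<le> real M * (Kr - 1)^n" .
    then have "real (card (A n)) * (l / NN n) powr s \<le> real M * (Kr - 1)^n * ((l / M) powr s / (Kr - 1/2)^n)"
      unfolding e2 using Kr2 by (intro mult_right_mono divide_nonneg_nonneg) auto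
    also have "\<dots> = C * q^n" unfolding C_def q_def by (simp add: power_divide)
    finally show ?thesis .
  qed
  have ev1: "\<forall>\<^sub>F n in sequentially. C * q^n < e" if "e > 0" for e
  proof -
    have "(\<lambda>n. C * q^n) \<longlonglongrightarrow> C * 0" using q by (intro tendsto_intros) simp
    then show ?thesis using that by (intro order_tendstoD(2)) auto
  qed
  have ev2: "\<forall>\<^sub>F n in sequentially. l * (1/Kr)^n < d" if "d > 0" for d
  proof -
    have "(\<lambda>n. l * (1/Kr)^n) \<longlonglongrightarrow> l * 0" using Kr2 by (intro tendsto_intros) simp
    then show ?thesis using that by (intro order_tendstoD(2)) auto
  qed
  have main: "hausdorff_pre s d X \<le> ennreal e" if X: "X \<subseteq> F \<inter> pt a b ` {0..1}" and d: "d > 0" and e: "e > 0" for X d e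
  proof -
    obtain n where n: "C * q^n < e" "l * (1/Kr)^n < d"
    proof -
      from eventually_conj[OF ev1[OF e] ev2[OF d]] obtain N0 where
        "\<And>n. n \<ge> N0 \<Longrightarrow> C * q^n < e \<and> l * (1/Kr)^n < d" unfolding eventually_sequentially by blast
      then show ?thesis using that by blast
    qed
    define U where "U i = (if i \<in> A n then piece a b (NN n) i else {})" for i
    have dU: "diameter (piece a b (NN n) i) \<le> l / NN n" for i
      using piece_diam(2)[OF NNp] unfolding l_def by blast
    have "l / NN n \<le> l * (1/Kr)^n"
    proof -
      have "real (NN n) \<ge> Kr ^ n" unfolding NN_def Kr_def using M1
        by (simp add: mult_le_cancel_right1)
      moreover have "Kr ^ n > 0" using Kr2 by simp
      ultimately have "l / NN n \<le> l / Kr ^ n" using lp by (intro divide_left_mono) auto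
      then show ?thesis by (simp add: power_one_over divide_inverse power_inverse)
    qed
    then have dU': "diameter (piece a b (NN n) i) \<le> d" for i using dU[of i] n(2) by linarith
    have Uin: "U \<in> {U. X \<subseteq> (\<Union>i. U i) \<and> (\<forall>i. bounded (U i) \<and> diameter (U i) \<le> d)}"
    proof safe
      fix x assume "x \<in> X"
      then have x: "x \<in> F" "x \<in> pt a b ` {0..1}" using X by auto
      obtain j where j: "j < NN n" "x \<in> piece a b (NN n) j" using cover_pieces[OF NNp x(2)] by blast
      then have "j \<in> A n" unfolding A_def using x(1) by blast
      then show "x \<in> (\<Union>i. U i)" using j unfolding U_def by auto
    next
      fix i show "bounded (U i)" unfolding U_def using piece_diam(1)[OF NNp] by auto
      show "diameter (U i) \<le> d" unfolding U_def using dU' d by auto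
    qed
    have fA: "finite (A n)" unfolding A_def by simp
    have "(\<Sum>i. diam_pow s (U i)) = (\<Sum>i\<in>A n. diam_pow s (U i))"
      by (rule suminf_finite[OF fA]) (simp add: U_def diam_pow_def)
    also have "\<dots> \<le> of_nat (card (A n)) * ennreal ((l / NN n) powr s)"
    proof (rule sum_bounded_above)
      fix i assume "i \<in> A n"
      then have Ui: "U i = piece a b (NN n) i" unfolding U_def by simp
      have "0 \<le> diameter (U i)" unfolding Ui using piece_diam(1)[OF NNp] by (rule diameter_ge_0)
      then have "diameter (U i) powr s \<le> (l / NN n) powr s" unfolding Ui using dU s0 by (intro powr_mono2) auto
      then show "diam_pow s (U i) \<le> ennreal ((l / NN n) powr s)" unfolding diam_pow_def using s0
        by (auto intro: ennreal_leI)
    qed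
    also have "\<dots> = ennreal (real (card (A n)) * (l / NN n) powr s)"
      by (simp add: ennreal_of_nat_eq_real_of_nat ennreal_mult)
    also have "\<dots> \<le> ennreal e" using T[of n] n(1) by (intro ennreal_leI) linarith
    finally have "(\<Sum>i. diam_pow s (U i)) \<le> ennreal e" .
    moreover have "hausdorff_pre s d X \<le> (\<Sum>i. diam_pow s (U i))"
      unfolding hausdorff_pre_def by (rule INF_lower[OF Uin])
    ultimately show ?thesis by simp
  qed
  have "hausdorff_measure s X = 0" if X: "X \<subseteq> F \<inter> pt a b ` {0..1}" for X
  proof -
    have "hausdorff_pre s d X = 0" if d: "d > 0" for d
    proof -
      have "hausdorff_pre s d X \<le> 0"
        by (rule ennreal_le_epsilon) (use main[OF X d] in simp)
      then show ?thesis by simp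
    qed
    then show ?thesis unfolding hausdorff_measure_def by simp
  qed
  then show ?thesis using s0 s1 by (intro exI[of _ s]) auto
qed

end


context ifs begin

lemma line_in_seg:
  assumes "affine_line L" shows "\<exists>a b. a \<noteq> b \<and> F \<inter> L \<subseteq> pt a b ` {0..1}"
proof -
  obtain p v where v: "v \<noteq> 0" "L = {p + t *\<^sub>R v | t. True}" using assms unfolding affine_line_def by blast
  obtain R0 where R0: "\<And>x. x \<in> F \<Longrightarrow> norm x \<le> R0" using F_bounded_norm by blast
  define R where "R = max R0 0"
  have R: "\<And>x. x \<in> F \<Longrightarrow> norm x \<le> R" "R \<ge> 0" unfolding R_def using R0 by (auto simp: le_max_iff_disj)
  have nv: "norm v > 0" using v by simp
  define T where "T = (R + norm p) / norm v + 1"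
  have T0: "T > 0" unfolding T_def using R nv by (simp add: add_nonneg_pos)
  define a where "a = p - T *\<^sub>R v"
  define b where "b = p + T *\<^sub>R v"
  have bma: "b - a = (2 * T) *\<^sub>R v" unfolding a_def b_def by (simp add: algebra_simps scaleR_2 flip: scaleR_scaleR)
  then have ab: "a \<noteq> b" using T0 v(1) by auto
  have "F \<inter> L \<subseteq> pt a b ` {0..1}"
  proof
    fix x assume x: "x \<in> F \<inter> L"
    then obtain t where t: "x = p + t *\<^sub>R v" using v(2) by blast
    have "\<bar>t\<bar> * norm v = norm (x - p)" using t by simp
    also have "\<dots> \<le> norm x + norm p" by (rule norm_triangle_ineq4)
    also have "\<dots> \<le> R + norm p" using R(1) x by simp
    finally have "\<bar>t\<bar> \<le> (R + norm p) / norm v" using nv by (simp add: le_divide_eq)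
    then have tT: "\<bar>t\<bar> < T" unfolding T_def by simp
    define u where "u = (t + T) / (2 * T)"
    have u: "0 \<le> u" "u \<le> 1" unfolding u_def using tT T0 by (auto simp: field_simps)
    have "pt a b u = p + (u * (2 * T) - T) *\<^sub>R v" unfolding pt_def bma
      by (simp add: a_def scaleR_left_diff_distrib diff_add_eq add_diff_eq)
    also have "u * (2 * T) - T = t" unfolding u_def using T0 by (simp add: field_simps)
    finally have "pt a b u = x" using t by simp
    then show "x \<in> pt a b ` {0..1}" using u by force
  qed
  then show ?thesis using ab by blast
qed

lemma dim_lt:
  assumes "affine_line L" shows "hausdorff_dim (F \<inter> L) < 1"
proof -
  obtain a b where ab: "a \<noteq> b" "F \<inter> L \<subseteq> pt a b ` {0..1}" using line_in_seg[OF assms] by blast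
  obtain s where s: "0 \<le> s" "s < 1" "\<And>X. X \<subseteq> F \<inter> pt a b ` {0..1} \<Longrightarrow> hausdorff_measure s X = 0"
    using null_seg[OF ab(1)] by blast
  have "hausdorff_measure s (F \<inter> L) = 0" using s(3) ab(2) by blast
  then have "s \<in> {s. 0 \<le> s \<and> hausdorff_measure s (F \<inter> L) = 0}" using s(1) by simp
  moreover have "bdd_below {s. 0 \<le> s \<and> hausdorff_measure s (F \<inter> L) = 0}" by (rule bdd_belowI[of _ 0]) simp
  ultimately have "hausdorff_dim (F \<inter> L) \<le> s" unfolding hausdorff_dim_def by (rule cInf_lower)
  then show ?thesis using s(2) by simp
qed

end

theorem corollary3p2:
  fixes m :: nat and \<phi> :: "nat \<Rightarrow> real^2 \<Rightarrow> real^2" and F :: "(real^2) set"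
  assumes "m \<ge> 1"
    and "\<forall>i<m. contracting_similarity (\<phi> i)"
    and "self_similar_set m \<phi> F"
    and "SSC m \<phi> F"
  shows "\<forall>L. affine_line L \<longrightarrow> hausdorff_dim (F \<inter> L) < 1"
proof -
  define r where "r i = (SOME r. 0 < r \<and> r < 1 \<and> (\<forall>x y. dist (\<phi> i x) (\<phi> i y) = r * dist x y))" for i
  have r: "0 < r i \<and> r i < 1 \<and> (\<forall>x y. dist (\<phi> i x) (\<phi> i y) = r i * dist x y)" if "i < m" for i
  proof -
    have "\<exists>r. 0 < r \<and> r < 1 \<and> (\<forall>x y. dist (\<phi> i x) (\<phi> i y) = r * dist x y)"
      using assms(2) that unfolding contracting_similarity_def by blast
    from someI_ex[OF this] show ?thesis unfolding r_def .
  qed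
  interpret ifs m \<phi> F r
  proof
    show "1 \<le> m" by (rule assms(1))
    show "\<And>i. i < m \<Longrightarrow> 0 < r i" "\<And>i. i < m \<Longrightarrow> r i < 1" using r by blast+
    show "\<And>i x y. i < m \<Longrightarrow> dist (\<phi> i x) (\<phi> i y) = r i * dist x y" using r by blast
    show "F \<noteq> {}" "compact F" "F = (\<Union>i<m. \<phi> i ` F)" using assms(3) unfolding self_similar_set_def by blast+
    show "\<And>i j. i < m \<Longrightarrow> j < m \<Longrightarrow> i \<noteq> j \<Longrightarrow> \<phi> i ` F \<inter> \<phi> j ` F = {}"
      using assms(4) unfolding SSC_def by blast
  qed
  show ?thesis using dim_lt by blast
qed


end
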